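(* Let $H>0$ and $R\in(0,\pi)$. For $0\le h\le H$ and $0\le\theta_0\le R$ let $u_{h,\theta_0}$ be the rotationally symmetric function on the cap $\Omega_R=\{\Psi(\theta,\phi):0\le\theta\le R\}$ given by $$u_{h,\theta_0}(\theta)=\begin{cases}h,&\theta\in[0,\theta_0],\\ \frac{h}{R-\theta_0}(R-\theta),&\theta\in(\theta_0,R],\end{cases}$$ (with $u_{h,R}\equiv h$). Then the function $(h,\theta_0)\mapsto R_1[u_{h,\theta_0}]$ on $[0,H]\times[0,R]$ attains its minimum at a unique point, namely $(H,\theta_0^* )$, where $\theta_0^*$ is the unique solution in $(0,R)$ of $$\sin\theta_0\,\big(H^2+(R-\theta_0)^2\big)=2(R-\theta_0)(\cos\theta_0-\cos R).$$ Explicitly, $R_1[u_{h,\theta_0}]=2\pi\Big[1-\cos\theta_0+\frac{(R-\theta_0)^2(\cos\theta_0-\cos R)}{(R-\theta_0)^2+h^2}\Big]$.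
   Context: Spherical coordinates $\Psi(\theta,\phi)=(\sin\theta\cos\phi,\sin\theta\sin\phi,\cos\theta)$ on $\mathbb{S}^2$. For $u$ on a domain $\Omega\subset\mathbb{S}^2$, $R_1[u]=\int_\Omega\frac{1}{1+|\nabla_{\mathbb{S}^2}u|^2}d\Omega$; for rotationally symmetric $u=u(\theta)$ on $\Omega_R$ this equals $2\pi\int_0^R\frac{\sin\theta}{1+u'(\theta)^2}d\theta$. The graphs of the $u_{h,\theta_0}$ are called radial frustum cones. *)

theory Defs
  imports "HOL-Analysis.Analysis"
begin

text \<open>Rotationally symmetric energy on the cap \<Omega>_R:
  R_1[u] = 2 pi * integral over [0,R] of sin t / (1 + u'(t)^2).
  The profile u is a real function of the polar angle; u' is taken as the
  (classical) derivative, which exists except on a null set for the profiles used.\<close>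
definition R1_rot :: "real \<Rightarrow> (real \<Rightarrow> real) \<Rightarrow> real" where
  "R1_rot R u = 2 * pi * integral {0..R} (\<lambda>t. sin t / (1 + (deriv u t)\<^sup>2))"

text \<open>Radial frustum cone profile u_{h,theta0} (extended to all real angles;
  only its values on [0,R] matter). For theta0 = R it is constantly h on [0,R].\<close>
definition frustum :: "real \<Rightarrow> real \<Rightarrow> real \<Rightarrow> real \<Rightarrow> real" where
  "frustum R h \<theta>\<^sub>0 t = (if t \<le> \<theta>\<^sub>0 then h else h / (R - \<theta>\<^sub>0) * (R - t))"

end

theory Submission imports Defs begin

lemma deriv_frustum:
  assumes "t \<noteq> th" "th \<le> R"
  shows "deriv (frustum R h th) t = (if t < th then 0 else - (h/(R-th)))"
proof (cases "t < th")
  case True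
  have "((\<lambda>_. h) has_real_derivative 0) (at t)" by simp
  then have "(frustum R h th has_real_derivative 0) (at t)"
    by (rule has_field_derivative_transform_within_open[where S="{..<th}"])
       (use True in \<open>auto simp: frustum_def\<close>)
  then show ?thesis using True by (simp add: DERIV_imp_deriv)
next
  case False
  then have tt: "t > th" using assms by auto
  define c where "c = h/(R-th)"
  have "((\<lambda>s. c * (R - s)) has_real_derivative (c * (0 - 1))) (at t)"
    by (auto intro!: derivative_eq_intros)
  then have "((\<lambda>s. h/(R-th) * (R - s)) has_real_derivative (- (h/(R-th)))) (at t)"
    by (simp add: c_def)
  then have "(frustum R h th has_real_derivative (- (h/(R-th)))) (at t)"
    by (rule has_field_derivative_transform_within_open[where S="{th<..}"])
       (use tt in \<open>auto simp: frustum_def\<close>)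
  then show ?thesis using False by (simp add: DERIV_imp_deriv)
qed

lemma sin_integral:
  fixes a b k :: real
  assumes "a \<le> b"
  shows "((\<lambda>t. k * sin t) has_integral (k * (cos a - cos b))) {a..b}"
proof -
  have "((\<lambda>t. k * sin t) has_integral ((-k * cos b) - (-k * cos a))) {a..b}"
    by (rule fundamental_theorem_of_calculus[OF assms, of "\<lambda>t. -k * cos t"])
       (auto intro!: derivative_eq_intros simp: has_real_derivative_iff_has_vector_derivative[symmetric])
  then show ?thesis by (simp add: algebra_simps)
qed

lemma R1_frustum:
  assumes "0 \<le> th" "th \<le> R"
  shows "R1_rot R (frustum R h th) =
     2 * pi * (1 - cos th + (R - th)\<^sup>2 * (cos th - cos R) / ((R - th)\<^sup>2 + h\<^sup>2))"
proof -
  define k where "k = 1 / (1 + (h/(R-th))\<^sup>2)"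
  let ?f = "\<lambda>t. sin t / (1 + (deriv (frustum R h th) t)\<^sup>2)"
  have i1: "(?f has_integral (1 * (cos 0 - cos th))) {0..th}"
    by (rule has_integral_spike_finite[where S="{th}", OF _ _ sin_integral[OF assms(1)]])
       (auto simp: deriv_frustum assms)
  have i2: "(?f has_integral (k * (cos th - cos R))) {th..R}"
    by (rule has_integral_spike_finite[where S="{th}", OF _ _ sin_integral[OF assms(2)]])
       (auto simp: deriv_frustum assms k_def)
  have "(?f has_integral (1 * (cos 0 - cos th) + k * (cos th - cos R))) {0..R}"
    by (rule has_integral_combine[OF assms i1 i2])
  then have "integral {0..R} ?f = 1 - cos th + k * (cos th - cos R)"
    by (simp add: integral_unique)
  moreover have "k * (cos th - cos R) = (R - th)\<^sup>2 * (cos th - cos R) / ((R - th)\<^sup>2 + h\<^sup>2)"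
  proof (cases "th = R")
    case False
    then have a: "R - th \<noteq> 0" by auto
    have "k = (R - th)\<^sup>2 / ((R - th)\<^sup>2 + h\<^sup>2)"
      unfolding k_def using a by (simp add: field_simps)
    then show ?thesis by simp
  qed simp
  ultimately show ?thesis unfolding R1_rot_def by simp
qed

definition phi :: "real \<Rightarrow> real \<Rightarrow> real \<Rightarrow> real" where
  "phi H R t = sin t * (H\<^sup>2 + (R - t)\<^sup>2) - 2 * (R - t) * (cos t - cos R)"
definition psi :: "real \<Rightarrow> real \<Rightarrow> real \<Rightarrow> real" where
  "psi H R t = sin t * (H\<^sup>2 + (R - t)\<^sup>2) / (R - t) - 2 * (cos t - cos R)"
definition gg :: "real \<Rightarrow> real \<Rightarrow> real \<Rightarrow> real" where
  "gg H R t = 1 - cos t + (R - t)\<^sup>2 * (cos t - cos R) / ((R - t)\<^sup>2 + H\<^sup>2)"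

lemma sin_gt_xcos:
  fixes x :: real
  assumes "0 < x" "x < pi"
  shows "x * cos x < sin x"
proof -
  have "\<And>y. 0 \<le> y \<Longrightarrow> y \<le> x \<Longrightarrow> ((\<lambda>y. sin y - y * cos y) has_real_derivative (y * sin y)) (at y)"
    by (auto intro!: derivative_eq_intros simp: algebra_simps)
  from MVT2[OF assms(1) this] obtain z where z: "0 < z" "z < x"
    "(sin x - x * cos x) - (sin 0 - 0 * cos 0) = (x - 0) * (z * sin z)" by blast
  have "sin z > 0" using z assms by (intro sin_gt_zero) auto
  then have "(x - 0) * (z * sin z) > 0" using z assms by simp
  then show ?thesis using z(3) by simp
qed

lemma pos_aux:
  fixes t R :: real
  assumes "0 < t" "t < R" "R < pi"
  shows "0 < sin t + (R - t) * cos t"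
proof (cases "cos t \<ge> 0")
  case True
  have "sin t > 0" using assms by (intro sin_gt_zero) auto
  moreover have "(R - t) * cos t \<ge> 0" using True assms by simp
  ultimately show ?thesis by linarith
next
  case False
  define x where "x = pi - t"
  have "\<not> t \<le> pi/2" using False cos_ge_zero[of t] assms by auto
  then have x: "0 < x" "x < pi" using assms by (auto simp: x_def)
  have "sin t = sin x" "cos t = - cos x" by (auto simp: x_def sin_diff cos_diff)
  have "(R - t) * cos t \<ge> (pi - t) * cos t" using False assms by (auto intro!: mult_right_mono_neg)
  moreover have "sin t + (pi - t) * cos t > 0"
    using sin_gt_xcos[OF x] \<open>sin t = sin x\<close> \<open>cos t = - cos x\<close> by (simp flip: x_def)
  ultimately show ?thesis by linarith
qed

lemma alg_psi:
  fixes a cs sn H :: real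
  assumes a: "a \<noteq> 0"
  shows "((cs * (H\<^sup>2 + a\<^sup>2) + (- 2 * a) * sn) * a + sn * (H\<^sup>2 + a\<^sup>2)) / (a * a) + sn * 2 = (H\<^sup>2 + a\<^sup>2) * (a * cs + sn) / a\<^sup>2"
proof -
  have "((cs * (H\<^sup>2 + a\<^sup>2) + (- 2 * a) * sn) * a + sn * (H\<^sup>2 + a\<^sup>2)) + sn * 2 * (a * a) = (H\<^sup>2 + a\<^sup>2) * (a * cs + sn)"
    by (simp add: algebra_simps power2_eq_square)
  then show ?thesis using a by (simp add: power2_eq_square add_divide_distrib[symmetric] divide_simps)
qed

lemma psi_deriv:
  assumes "t \<noteq> R"
  shows "(psi H R has_real_derivative ((H\<^sup>2 + (R - t)\<^sup>2) * ((R - t) * cos t + sin t) / (R - t)\<^sup>2)) (at t)"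
proof -
  have a: "R - t \<noteq> 0" using assms by auto
  show ?thesis
    unfolding psi_def[abs_def]
    using a apply (auto intro!: derivative_eq_intros)
    apply (subst alg_psi[OF a, symmetric])
    apply (simp add: algebra_simps)
    done
qed


lemma psi_mono:
  assumes "0 < x" "x < y" "y < R" "R < pi"
  shows "psi H R x < psi H R y"
proof -
  have "\<And>z. x \<le> z \<Longrightarrow> z \<le> y \<Longrightarrow> (psi H R has_real_derivative ((H\<^sup>2 + (R - z)\<^sup>2) * ((R - z) * cos z + sin z) / (R - z)\<^sup>2)) (at z)"
    using assms by (intro psi_deriv) auto
  from MVT2[OF assms(2) this] obtain z where z: "x < z" "z < y"
    "psi H R y - psi H R x = (y - x) * ((H\<^sup>2 + (R - z)\<^sup>2) * ((R - z) * cos z + sin z) / (R - z)\<^sup>2)" by blast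
  have p: "0 < sin z + (R - z) * cos z" using z assms by (intro pos_aux) auto
  have "(H\<^sup>2 + (R - z)\<^sup>2) > 0" using z assms by (simp add: add_nonneg_pos)
  moreover have "(R - z)\<^sup>2 > 0" using z assms by simp
  define Q where "Q = (H\<^sup>2 + (R - z)\<^sup>2) * ((R - z) * cos z + sin z) / (R - z)\<^sup>2"
  ultimately have "Q > 0"
    using p z assms unfolding Q_def by (intro divide_pos_pos mult_pos_pos) (auto simp: algebra_simps)
  then have "(y - x) * Q > 0"
    using z by simp
  then show ?thesis using z(3) unfolding Q_def by linarith
qed

lemma phi_psi: "t \<noteq> R \<Longrightarrow> phi H R t = (R - t) * psi H R t"
  unfolding phi_def psi_def by (simp add: field_simps)

lemma alg_gg:
  fixes a c sn H :: real
  assumes D: "a\<^sup>2 + H\<^sup>2 \<noteq> 0"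
  shows "sn + (((- 2 * a) * c - sn * a\<^sup>2) * (a\<^sup>2 + H\<^sup>2) - a\<^sup>2 * c * (- 2 * a)) / ((a\<^sup>2 + H\<^sup>2) * (a\<^sup>2 + H\<^sup>2))
    = H\<^sup>2 * (sn * (H\<^sup>2 + a\<^sup>2) - 2 * a * c) / (a\<^sup>2 + H\<^sup>2)\<^sup>2"
proof -
  have "sn * ((a\<^sup>2 + H\<^sup>2) * (a\<^sup>2 + H\<^sup>2)) + (((- 2 * a) * c - sn * a\<^sup>2) * (a\<^sup>2 + H\<^sup>2) - a\<^sup>2 * c * (- 2 * a))
     = H\<^sup>2 * (sn * (H\<^sup>2 + a\<^sup>2) - 2 * a * c)"
    by (simp add: algebra_simps power2_eq_square)
  then show ?thesis using D by (simp add: power2_eq_square add_divide_distrib[symmetric] divide_simps)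
qed

lemma gg_deriv:
  fixes H :: real
  assumes "H > 0"
  shows "(gg H R has_real_derivative (H\<^sup>2 * phi H R t / ((R - t)\<^sup>2 + H\<^sup>2)\<^sup>2)) (at t)"
proof -
  have d: "(R - t)\<^sup>2 + H\<^sup>2 \<noteq> 0" using assms by (simp add: add_nonneg_pos)
  have "(gg H R has_real_derivative (sin t + ((( - 2 * (R - t)) * (cos t - cos R) - sin t * (R - t)\<^sup>2) * ((R - t)\<^sup>2 + H\<^sup>2) - (R - t)\<^sup>2 * (cos t - cos R) * (- 2 * (R - t))) / (((R - t)\<^sup>2 + H\<^sup>2) * ((R - t)\<^sup>2 + H\<^sup>2)))) (at t)"
    unfolding gg_def[abs_def]
    using d by (auto intro!: derivative_eq_intros simp: algebra_simps)
  then show ?thesis unfolding phi_def alg_gg[OF d] .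
qed


lemma phi_exists:
  fixes H R :: real
  assumes "H > 0" "0 < R" "R < pi"
  shows "\<exists>ts. 0 < ts \<and> ts < R \<and> phi H R ts = 0"
proof -
  have c: "cos R < cos 0" using assms by (intro cos_monotone_0_pi) auto
  have p0: "phi H R 0 < 0" using c assms unfolding phi_def by (simp add: mult_pos_pos)
  have s: "sin R > 0" using assms by (intro sin_gt_zero) auto
  have pR: "phi H R R > 0" using s assms unfolding phi_def by simp
  have "continuous_on {0..R} (phi H R)" unfolding phi_def[abs_def] by (intro continuous_intros)
  from IVT'[of "phi H R" 0 0 R, OF _ _ _ this] p0 pR assms obtain x where
    "0 \<le> x" "x \<le> R" "phi H R x = 0" by auto
  moreover have "x \<noteq> 0" "x \<noteq> R" using p0 pR \<open>phi H R x = 0\<close> by auto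
  ultimately show ?thesis by (intro exI[of _ x]) auto
qed

lemma phi_sign:
  fixes H R :: real
  assumes "R < pi" "0 < ts" "ts < R" "phi H R ts = 0" "0 < z" "z < R"
  shows "z < ts \<Longrightarrow> phi H R z < 0" and "ts < z \<Longrightarrow> phi H R z > 0"
proof -
  have ps: "psi H R ts = 0" using phi_psi[of ts R H] assms by simp
  show "z < ts \<Longrightarrow> phi H R z < 0"
  proof -
    assume "z < ts"
    then have "psi H R z < 0" using psi_mono[of z ts R H] ps assms by simp
    then show ?thesis using phi_psi[of z R H] assms by (simp add: mult_pos_neg)
  qed
  show "ts < z \<Longrightarrow> phi H R z > 0"
  proof -
    assume "ts < z"
    then have "psi H R z > 0" using psi_mono[of ts z R H] ps assms by simp
    then show ?thesis using phi_psi[of z R H] assms by simp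
  qed
qed

lemma phi_unique:
  fixes H R :: real
  assumes "R < pi" "0 < ts" "ts < R" "phi H R ts = 0" "0 < t" "t < R" "phi H R t = 0"
  shows "t = ts"
  using phi_sign[OF assms(1-4) assms(5,6)] assms(7) by (cases t ts rule: linorder_cases) auto

lemma gg_strict:
  fixes H R :: real
  assumes "H > 0" "R < pi" "0 < ts" "ts < R" "phi H R ts = 0" "0 \<le> t" "t \<le> R" "t \<noteq> ts"
  shows "gg H R ts < gg H R t"
proof (cases "t < ts")
  case True
  from MVT2[OF True, of "gg H R" "\<lambda>t. H\<^sup>2 * phi H R t / ((R - t)\<^sup>2 + H\<^sup>2)\<^sup>2"] gg_deriv[OF assms(1)]
  obtain z where z: "t < z" "z < ts" "gg H R ts - gg H R t = (ts - t) * (H\<^sup>2 * phi H R z / ((R - z)\<^sup>2 + H\<^sup>2)\<^sup>2)"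
    by blast
  have "phi H R z < 0" using phi_sign(1)[OF assms(2-5), of z] z assms by auto
  then have "H\<^sup>2 * phi H R z / ((R - z)\<^sup>2 + H\<^sup>2)\<^sup>2 < 0" using assms
    by (intro divide_neg_pos mult_pos_neg) (auto simp: add_nonneg_pos)
  then have "(ts - t) * (H\<^sup>2 * phi H R z / ((R - z)\<^sup>2 + H\<^sup>2)\<^sup>2) < 0" using True
    by (intro mult_pos_neg) auto
  then show ?thesis using z(3) by linarith
next
  case False
  then have F: "ts < t" using assms by auto
  from MVT2[OF F, of "gg H R" "\<lambda>t. H\<^sup>2 * phi H R t / ((R - t)\<^sup>2 + H\<^sup>2)\<^sup>2"] gg_deriv[OF assms(1)]
  obtain z where z: "ts < z" "z < t" "gg H R t - gg H R ts = (t - ts) * (H\<^sup>2 * phi H R z / ((R - z)\<^sup>2 + H\<^sup>2)\<^sup>2)"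
    by blast
  have "phi H R z > 0" using phi_sign(2)[OF assms(2-5), of z] z assms by auto
  then have "H\<^sup>2 * phi H R z / ((R - z)\<^sup>2 + H\<^sup>2)\<^sup>2 > 0" using assms
    by (intro divide_pos_pos mult_pos_pos) (auto simp: add_nonneg_pos)
  then have "(t - ts) * (H\<^sup>2 * phi H R z / ((R - z)\<^sup>2 + H\<^sup>2)\<^sup>2) > 0" using F
    by (intro mult_pos_pos) auto
  then show ?thesis using z(3) by linarith
qed

lemma gg_h_mono:
  fixes H R h t :: real
  assumes "H > 0" "R < pi" "0 \<le> h" "h \<le> H" "0 \<le> t" "t \<le> R"
  shows "gg H R t \<le> gg h R t" and "t < R \<Longrightarrow> h < H \<Longrightarrow> gg H R t < gg h R t"
proof -
  have "(R - t)\<^sup>2 * (cos t - cos R) / ((R - t)\<^sup>2 + H\<^sup>2) \<le> (R - t)\<^sup>2 * (cos t - cos R) / ((R - t)\<^sup>2 + h\<^sup>2)"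
  proof (cases "t = R")
    case False
    have c: "cos R < cos t" using assms False by (intro cos_monotone_0_pi) auto
    have "h\<^sup>2 \<le> H\<^sup>2" using assms by (intro power_mono) auto
    then show ?thesis using c assms False
      by (intro divide_left_mono) (auto intro!: mult_pos_pos add_pos_nonneg)
  qed simp
  then show "gg H R t \<le> gg h R t" unfolding gg_def by simp
  assume "t < R" "h < H"
  have c: "cos R < cos t" using assms \<open>t < R\<close> by (intro cos_monotone_0_pi) auto
  have "h\<^sup>2 < H\<^sup>2" using assms \<open>h < H\<close> by (intro power_strict_mono) auto
  then have "(R - t)\<^sup>2 * (cos t - cos R) / ((R - t)\<^sup>2 + H\<^sup>2) < (R - t)\<^sup>2 * (cos t - cos R) / ((R - t)\<^sup>2 + h\<^sup>2)"
    using c assms \<open>t < R\<close>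
    by (intro divide_strict_left_mono) (auto intro!: mult_pos_pos add_pos_nonneg)
  then show "gg H R t < gg h R t" unfolding gg_def by simp
qed


lemma key_min:
  fixes H R h t ts :: real
  assumes "H > 0" "R < pi" "0 < ts" "ts < R" "phi H R ts = 0"
    "0 \<le> h" "h \<le> H" "0 \<le> t" "t \<le> R" "(h, t) \<noteq> (H, ts)"
  shows "gg H R ts < gg h R t"
proof (cases "t = ts")
  case True
  then have "h < H" using assms by auto
  then show ?thesis using gg_h_mono(2)[OF assms(1,2,6,7,8,9)] True assms by auto
next
  case False
  have "gg H R ts < gg H R t" using gg_strict[OF assms(1-5,8,9) False] .
  also have "\<dots> \<le> gg h R t" using gg_h_mono(1)[OF assms(1,2,6,7,8,9)] .
  finally show ?thesis .
qed

lemma R1_gg: "0 \<le> t \<Longrightarrow> t \<le> R \<Longrightarrow> R1_rot R (frustum R h t) = 2 * pi * gg h R t"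
  using R1_frustum[of t R h] unfolding gg_def by simp

theorem mainTheorem4:
  fixes H R :: real
  assumes "H > 0" and "0 < R" and "R < pi"
  shows "(\<forall>h \<in> {0..H}. \<forall>\<theta>\<^sub>0 \<in> {0..R}.
            R1_rot R (frustum R h \<theta>\<^sub>0) =
              2 * pi * (1 - cos \<theta>\<^sub>0 + (R - \<theta>\<^sub>0)\<^sup>2 * (cos \<theta>\<^sub>0 - cos R) / ((R - \<theta>\<^sub>0)\<^sup>2 + h\<^sup>2)))
       \<and> (\<exists>\<theta>s. \<theta>s \<in> {0<..<R}
              \<and> sin \<theta>s * (H\<^sup>2 + (R - \<theta>s)\<^sup>2) = 2 * (R - \<theta>s) * (cos \<theta>s - cos R)
              \<and> (\<forall>t \<in> {0<..<R}. sin t * (H\<^sup>2 + (R - t)\<^sup>2) = 2 * (R - t) * (cos t - cos R) \<longrightarrow> t = \<theta>s)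
              \<and> {p \<in> {0..H} \<times> {0..R}. \<forall>q \<in> {0..H} \<times> {0..R}.
                   R1_rot R (frustum R (fst p) (snd p)) \<le> R1_rot R (frustum R (fst q) (snd q))}
                = {(H, \<theta>s)})"
proof
  show "\<forall>h \<in> {0..H}. \<forall>\<theta>\<^sub>0 \<in> {0..R}.
            R1_rot R (frustum R h \<theta>\<^sub>0) =
              2 * pi * (1 - cos \<theta>\<^sub>0 + (R - \<theta>\<^sub>0)\<^sup>2 * (cos \<theta>\<^sub>0 - cos R) / ((R - \<theta>\<^sub>0)\<^sup>2 + h\<^sup>2))"
    using R1_frustum by auto
  obtain ts where ts: "0 < ts" "ts < R" "phi H R ts = 0" using phi_exists[OF assms] by blast
  have lt: "R1_rot R (frustum R H ts) < R1_rot R (frustum R h t)"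
    if "h \<in> {0..H}" "t \<in> {0..R}" "(h, t) \<noteq> (H, ts)" for h t
    using key_min[OF assms(1,3) ts, of h t] that ts R1_gg[of t R h] R1_gg[of ts R H] by auto
  show "\<exists>\<theta>s. \<theta>s \<in> {0<..<R}
              \<and> sin \<theta>s * (H\<^sup>2 + (R - \<theta>s)\<^sup>2) = 2 * (R - \<theta>s) * (cos \<theta>s - cos R)
              \<and> (\<forall>t \<in> {0<..<R}. sin t * (H\<^sup>2 + (R - t)\<^sup>2) = 2 * (R - t) * (cos t - cos R) \<longrightarrow> t = \<theta>s)
              \<and> {p \<in> {0..H} \<times> {0..R}. \<forall>q \<in> {0..H} \<times> {0..R}.
                   R1_rot R (frustum R (fst p) (snd p)) \<le> R1_rot R (frustum R (fst q) (snd q))}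
                = {(H, \<theta>s)}"
  proof (intro exI[of _ ts] conjI)
    show "ts \<in> {0<..<R}" using ts by auto
    show "sin ts * (H\<^sup>2 + (R - ts)\<^sup>2) = 2 * (R - ts) * (cos ts - cos R)"
      using ts(3) unfolding phi_def by simp
    show "\<forall>t \<in> {0<..<R}. sin t * (H\<^sup>2 + (R - t)\<^sup>2) = 2 * (R - t) * (cos t - cos R) \<longrightarrow> t = ts"
      using phi_unique[OF assms(3) ts] unfolding phi_def by auto
    show "{p \<in> {0..H} \<times> {0..R}. \<forall>q \<in> {0..H} \<times> {0..R}.
                   R1_rot R (frustum R (fst p) (snd p)) \<le> R1_rot R (frustum R (fst q) (snd q))}
                = {(H, ts)}"
    proof (intro equalityI subsetI)
      fix p assume p: "p \<in> {p \<in> {0..H} \<times> {0..R}. \<forall>q \<in> {0..H} \<times> {0..R}.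
                   R1_rot R (frustum R (fst p) (snd p)) \<le> R1_rot R (frustum R (fst q) (snd q))}"
      obtain h t where pe: "p = (h, t)" by fastforce
      have hq: "(H, ts) \<in> {0..H} \<times> {0..R}" using ts assms by auto
      show "p \<in> {(H, ts)}"
      proof (rule ccontr)
        assume "p \<notin> {(H, ts)}"
        then have "R1_rot R (frustum R H ts) < R1_rot R (frustum R h t)"
          using p pe by (intro lt) auto
        moreover have "R1_rot R (frustum R h t) \<le> R1_rot R (frustum R H ts)"
          using p pe hq by auto
        ultimately show False by linarith
      qed
    next
      fix p assume "p \<in> {(H, ts)}"
      then have pe: "p = (H, ts)" by simp
      have "R1_rot R (frustum R H ts) \<le> R1_rot R (frustum R (fst q) (snd q))"
        if "q \<in> {0..H} \<times> {0..R}" for q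
      proof (cases "q = (H, ts)")
        case False
        then show ?thesis using lt[of "fst q" "snd q"] that by (cases q) auto
      qed simp
      then show "p \<in> {p \<in> {0..H} \<times> {0..R}. \<forall>q \<in> {0..H} \<times> {0..R}.
                   R1_rot R (frustum R (fst p) (snd p)) \<le> R1_rot R (frustum R (fst q) (snd q))}"
        using pe ts assms by auto
    qed
  qed
qed

end
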